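(* The manifold with corners $M:=[0,\infty[$ does not admit a local addition in Michor's sense, i.e., there is no smooth map $\tau\colon {}^iTM\to M$ such that (A1) $(\tau,\pi_{TM})\colon{}^iTM\to M\times M$ is a diffeomorphism onto an open neighbourhood of the diagonal in $M\times M$, and (A2) $\tau(0_x)=x$ for all $x\in M$.
   Context: Identify $TM$ with $M\times\mathbb R$ and $\pi_{TM}(x,y)=x$. The set of inner tangent vectors is ${}^iTM=(\{0\}\times[0,\infty[)\cup(]0,\infty[\times\mathbb R)$ (the tangent vectors $\dot\gamma(0)$ of smooth curves $\gamma\colon[0,1[\,\to M$), a convex subset of $\mathbb R^2$ with dense interior; $0_x=(x,0)$. Smoothness on such sets: a map $f$ on a locally convex subset $U$ of $\mathbb R^m$ with dense interior is $C^1$ if it is continuous, $C^1$ on the interior, and its differential extends continuously to $U\times\mathbb R^m$; $C^k$ inductively; smooth means $C^k$ for all $k$. A diffeomorphism is a smooth bijection with smooth inverse. *)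

theory Defs
  imports "HOL-Analysis.Analysis"
begin

definition lc_dense :: "'a::euclidean_space set \<Rightarrow> bool" where
  "lc_dense U \<longleftrightarrow> U \<subseteq> closure (interior U) \<and>
     (\<forall>x\<in>U. \<exists>V. open V \<and> x \<in> V \<and> convex (U \<inter> V))"

fun iter_dir :: "('a::real_normed_vector \<Rightarrow> 'b::real_normed_vector) \<Rightarrow> 'a list \<Rightarrow> 'a \<Rightarrow> 'b" where
  "iter_dir f [] = f"
| "iter_dir f (v # vs) = (\<lambda>x. frechet_derivative (iter_dir f vs) (at x) v)"

definition smooth_lc :: "'a::euclidean_space set \<Rightarrow> ('a \<Rightarrow> 'b::euclidean_space) \<Rightarrow> bool" where
  "smooth_lc U f \<longleftrightarrow> lc_dense U \<and> continuous_on U f \<and>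
     (\<forall>vs. \<forall>x\<in>interior U. iter_dir f vs differentiable (at x)) \<and>
     (\<forall>vs. \<exists>g. continuous_on U g \<and> (\<forall>x\<in>interior U. g x = iter_dir f vs x))"

definition diffeo_betw :: "'a::euclidean_space set \<Rightarrow> 'b::euclidean_space set \<Rightarrow> ('a \<Rightarrow> 'b) \<Rightarrow> bool" where
  "diffeo_betw U V f \<longleftrightarrow> bij_betw f U V \<and> smooth_lc U f \<and> smooth_lc V (inv_into U f)"

end

theory Submission
  imports Defs
begin

theorem propositionA2:
  fixes M :: "real set" and iTM :: "(real \<times> real) set"
  assumes "M = {0..}"
    and "iTM = ({0} \<times> {0..}) \<union> ({0<..} \<times> UNIV)"
  shows "\<not> (\<exists>\<tau> :: real \<times> real \<Rightarrow> real.
            smooth_lc iTM \<tau> \<and> \<tau> ` iTM \<subseteq> M \<and>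
            (\<exists>W. openin (top_of_set (M \<times> M)) W \<and> (\<forall>x\<in>M. (x, x) \<in> W) \<and>
                 diffeo_betw iTM W (\<lambda>v. (\<tau> v, fst v))) \<and>
            (\<forall>x\<in>M. \<tau> (x, 0) = x))"
proof
  assume "\<exists>\<tau> :: real \<times> real \<Rightarrow> real.
            smooth_lc iTM \<tau> \<and> \<tau> ` iTM \<subseteq> M \<and>
            (\<exists>W. openin (top_of_set (M \<times> M)) W \<and> (\<forall>x\<in>M. (x, x) \<in> W) \<and>
                 diffeo_betw iTM W (\<lambda>v. (\<tau> v, fst v))) \<and>
            (\<forall>x\<in>M. \<tau> (x, 0) = x)"
  then obtain \<tau> :: "real \<times> real \<Rightarrow> real" and W where
    sm: "smooth_lc iTM \<tau>" and op: "openin (top_of_set (M \<times> M)) W"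
    and diag: "\<forall>x\<in>M. (x, x) \<in> W" and df: "diffeo_betw iTM W (\<lambda>v. (\<tau> v, fst v))"
    and z: "\<forall>x\<in>M. \<tau> (x, 0) = x" by blast
  define F where "F = (\<lambda>v. (\<tau> v, fst v))"
  define G where "G = inv_into iTM F"
  have bij: "bij_betw F iTM W" using df unfolding diffeo_betw_def F_def by blast
  have cG: "continuous_on W G" using df unfolding diffeo_betw_def smooth_lc_def G_def F_def by blast
  have ct: "continuous_on iTM \<tau>" using sm unfolding smooth_lc_def by blast
  have cF: "continuous_on iTM F" unfolding F_def
    by (intro continuous_intros ct)
  have o0: "(0::real,0::real) \<in> iTM" using assms by auto
  have F0: "F (0,0) = (0,0)" using z assms unfolding F_def by auto
  have W0: "(0::real,0::real) \<in> W" using diag assms by auto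
  have WM: "W \<subseteq> M \<times> M" using openin_imp_subset[OF op] by simp
  obtain d where d: "d > 0" "\<forall>y\<in>M \<times> M. dist y (0,0) < d \<longrightarrow> y \<in> W"
    using op W0 unfolding openin_euclidean_subtopology_iff by blast
  define K where "K = cball (0::real\<times>real) (d/2) \<inter> (M \<times> M)"
  have cK: "compact K" unfolding K_def using assms
    by (intro compact_Int_closed compact_cball closed_Times) (simp_all add: closed_atLeast)
  have KW: "K \<subseteq> W"
  proof
    fix y assume "y \<in> K"
    hence "y \<in> M \<times> M" "dist 0 y \<le> d/2" unfolding K_def by auto
    hence "y \<in> M \<times> M" "dist y (0,0) < d" using d(1) by (auto simp: dist_commute zero_prod_def)
    thus "y \<in> W" using d(2) by blast
  qed
  have cGK: "compact (G ` K)"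
    using compact_continuous_image[OF continuous_on_subset[OF cG KW] cK] .
  have GKi: "G ` K \<subseteq> iTM"
  proof
    fix v assume "v \<in> G ` K"
    then obtain y where y: "y \<in> K" "v = G y" by blast
    hence "y \<in> F ` iTM" using KW bij by (auto simp: bij_betw_def)
    thus "v \<in> iTM" unfolding y(2) G_def by (rule inv_into_into)
  qed
  have clGK: "closed (G ` K)" using cGK compact_imp_closed by blast
  obtain r where r: "r > 0" "\<forall>v\<in>iTM. dist v (0,0) < r \<longrightarrow> dist (F v) (F (0,0)) < d/2"
    using cF o0 d(1) unfolding continuous_on_iff
    by (metis half_gt_zero)
  have inGK: "v \<in> G ` K" if "v \<in> iTM" "dist v (0,0) < r" for v
  proof -
    have "F v \<in> W" using bij that(1) by (auto simp: bij_betw_def)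
    moreover have "dist (F v) (0,0) < d/2" using r that F0 by auto
    hence "dist 0 (F v) \<le> d/2" by (simp add: dist_commute zero_prod_def)
    ultimately have "F v \<in> K" using WM unfolding K_def by auto
    moreover have "G (F v) = v" unfolding G_def
      using bij that(1) by (simp add: bij_betw_def inv_into_f_f)
    ultimately show ?thesis by force
  qed
  define s where "s = (\<lambda>n::nat. (r/4 * inverse (real (Suc n)), - r/4))"
  have sl: "s \<longlonglongrightarrow> (0, - r/4)" unfolding s_def
    by (intro tendsto_Pair tendsto_const tendsto_mult_right_zero LIMSEQ_inverse_real_of_nat)
  have sK: "s n \<in> G ` K" for n
  proof (rule inGK)
    have p: "r/4 * inverse (real (Suc n)) > 0" using r by simp
    then show "s n \<in> iTM" using assms unfolding s_def by auto
    have le: "r/4 * inverse (real (Suc n)) \<le> r/4" using r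
      by (simp add: divide_simps)
    have "dist (s n) (0,0) = sqrt ((r/4 * inverse (real (Suc n)))^2 + (r/4)^2)"
      unfolding s_def by (simp add: dist_Pair_Pair dist_real_def power_divide)
    also have "\<dots> \<le> \<bar>r/4 * inverse (real (Suc n))\<bar> + \<bar>r/4\<bar>"
      by (rule sqrt_sum_squares_le_sum_abs)
    also have "\<dots> < r" using le p r(1) by (simp only: abs_of_pos)
    finally show "dist (s n) (0,0) < r" .
  qed
  have "(0, - r/4) \<in> G ` K"
    using clGK sK sl closed_sequentially by blast
  hence "(0, - r/4) \<in> iTM" using GKi by blast
  thus False using assms r by auto
qed

end
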